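(* Let $x^*\in\mathcal{X}$. If for every neighborhood $U$ of $x^*$ in $\mathcal{X}$ there is a solution $y_U(t)$ of $\dot y_k=v_k(Q(y))$, $k\in\mathcal{N}$, such that $x_U(t)=Q(y_U(t))\in U$ for all $t\ge0$, then $x^*$ is a Nash equilibrium.
   Context: Setting: finite game with players $\mathcal{N}$, action sets $\mathcal{A}_k$, mixed strategies $\mathcal{X}_k=\Delta(\mathcal{A}_k)$, $\mathcal{X}=\prod_k\mathcal{X}_k$, multilinear expected payoffs $u_k$, payoff vectors $v_k(x)=(u_k(\alpha;x_{-k}))_{\alpha\in\mathcal{A}_k}$. Each player has a penalty function $h_k$ on $\mathcal{X}_k$ (continuous, $C^\infty$ on relative interiors of faces, strongly convex: $h(tx_1+(1-t)x_2)\le th(x_1)+(1-t)h(x_2)-\tfrac12Kt(1-t)\|x_1-x_2\|^2$, $K>0$), with choice map $Q_k(y_k)=\arg\max_{x_k\in\mathcal{X}_k}\{\langle y_k,x_k\rangle-h_k(x_k)\}$; $Q=(Q_k)_k$. Nash equilibrium: $u_k(x^* )\ge u_k(x_k;x^*_{-k})$ for all $x_k\in\mathcal{X}_k$, $k\in\mathcal{N}$. *)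

theory Defs
  imports "HOL-Analysis.Analysis"
begin

text \<open>Players: the finite type 'n (all of UNIV). Player k has finite nonempty
action set A k inside the ambient action type 'a. Mixed strategies of player k are
functions 'a => real supported on A k, nonnegative and summing to 1.
pay k alpha is the payoff of player k at the pure profile alpha.\<close>

definition mixed :: "'a set \<Rightarrow> ('a \<Rightarrow> real) set" where
  "mixed Ak = {xk. (\<forall>a. a \<notin> Ak \<longrightarrow> xk a = 0) \<and> (\<forall>a\<in>Ak. 0 \<le> xk a) \<and> sum xk Ak = 1}"

definition profiles :: "('n \<Rightarrow> 'a set) \<Rightarrow> ('n \<Rightarrow> 'a \<Rightarrow> real) set" where
  "profiles A = {x. \<forall>k. x k \<in> mixed (A k)}"

definition exp_payoff :: "('n::finite \<Rightarrow> 'a set) \<Rightarrow> ('n \<Rightarrow> ('n \<Rightarrow> 'a) \<Rightarrow> real)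
    \<Rightarrow> 'n \<Rightarrow> ('n \<Rightarrow> 'a \<Rightarrow> real) \<Rightarrow> real" where
  "exp_payoff A pay k x = (\<Sum>\<alpha>\<in>PiE UNIV A. (\<Prod>l\<in>UNIV. x l (\<alpha> l)) * pay k \<alpha>)"

definition payoff_vec :: "('n::finite \<Rightarrow> 'a set) \<Rightarrow> ('n \<Rightarrow> ('n \<Rightarrow> 'a) \<Rightarrow> real)
    \<Rightarrow> 'n \<Rightarrow> ('n \<Rightarrow> 'a \<Rightarrow> real) \<Rightarrow> 'a \<Rightarrow> real" where
  "payoff_vec A pay k x a = exp_payoff A pay k (x(k := (\<lambda>b. if b = a then 1 else 0)))"

definition nash_eq :: "('n::finite \<Rightarrow> 'a set) \<Rightarrow> ('n \<Rightarrow> ('n \<Rightarrow> 'a) \<Rightarrow> real)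
    \<Rightarrow> ('n \<Rightarrow> 'a \<Rightarrow> real) \<Rightarrow> bool" where
  "nash_eq A pay xs \<longleftrightarrow> xs \<in> profiles A \<and>
     (\<forall>k. \<forall>xk\<in>mixed (A k). exp_payoff A pay k (xs(k := xk)) \<le> exp_payoff A pay k xs)"

definition choice :: "'a set \<Rightarrow> (('a \<Rightarrow> real) \<Rightarrow> real) \<Rightarrow> ('a \<Rightarrow> real) \<Rightarrow> ('a \<Rightarrow> real)" where
  "choice Ak hk yk = (THE xk. xk \<in> mixed Ak \<and>
     (\<forall>x'\<in>mixed Ak. (\<Sum>a\<in>Ak. yk a * x' a) - hk x' \<le> (\<Sum>a\<in>Ak. yk a * xk a) - hk xk))"

definition choice_map :: "('n \<Rightarrow> 'a set) \<Rightarrow> ('n \<Rightarrow> ('a \<Rightarrow> real) \<Rightarrow> real)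
    \<Rightarrow> ('n \<Rightarrow> 'a \<Rightarrow> real) \<Rightarrow> ('n \<Rightarrow> 'a \<Rightarrow> real)" where
  "choice_map A h y = (\<lambda>k. choice (A k) (h k) (y k))"

definition strongly_convex_on :: "'a set \<Rightarrow> real \<Rightarrow> (('a \<Rightarrow> real) \<Rightarrow> real) \<Rightarrow> bool" where
  "strongly_convex_on Ak K hk \<longleftrightarrow> (\<forall>x1\<in>mixed Ak. \<forall>x2\<in>mixed Ak. \<forall>t::real. 0 \<le> t \<and> t \<le> 1 \<longrightarrow>
     hk (\<lambda>a. t * x1 a + (1 - t) * x2 a) \<le> t * hk x1 + (1 - t) * hk x2
        - K * t * (1 - t) * (\<Sum>a\<in>Ak. (x1 a - x2 a)\<^sup>2) / 2)"

text \<open>The face of the simplex spanned by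
S (nonempty, S within A_k) has relative interior consisting of strategies with support
exactly S; its tangent space consists of directions supported on S with zero sum.
C-infinity is expressed as: all iterated directional derivatives along tangent
directions exist and are continuous on the relative interior.\<close>
definition face_relint :: "'a set \<Rightarrow> 'a set \<Rightarrow> ('a \<Rightarrow> real) set" where
  "face_relint Ak S = {x \<in> mixed Ak. \<forall>a\<in>Ak. 0 < x a \<longleftrightarrow> a \<in> S}"

definition face_tangent :: "'a set \<Rightarrow> ('a \<Rightarrow> real) set" where
  "face_tangent S = {d. (\<forall>a. a \<notin> S \<longrightarrow> d a = 0) \<and> sum d S = 0}"

fun dirderiv :: "(('a \<Rightarrow> real) \<Rightarrow> real) \<Rightarrow> ('a \<Rightarrow> real) list \<Rightarrow> ('a \<Rightarrow> real) \<Rightarrow> real" where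
  "dirderiv f [] x = f x"
| "dirderiv f (d # ds) x = deriv (\<lambda>t. dirderiv f ds (\<lambda>a. x a + t * d a)) 0"

definition smooth_on_faces :: "'a set \<Rightarrow> (('a \<Rightarrow> real) \<Rightarrow> real) \<Rightarrow> bool" where
  "smooth_on_faces Ak hk \<longleftrightarrow> (\<forall>S. S \<noteq> {} \<and> S \<subseteq> Ak \<longrightarrow>
     (\<forall>ds. set ds \<subseteq> face_tangent S \<longrightarrow>
        continuous_on (face_relint Ak S) (dirderiv hk ds) \<and>
        (\<forall>d\<in>face_tangent S. \<forall>x\<in>face_relint Ak S.
           (\<lambda>t. dirderiv hk ds (\<lambda>a. x a + t * d a)) differentiable (at 0))))"

definition penalty :: "'a set \<Rightarrow> (('a \<Rightarrow> real) \<Rightarrow> real) \<Rightarrow> bool" where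
  "penalty Ak hk \<longleftrightarrow> continuous_on (mixed Ak) hk \<and> smooth_on_faces Ak hk \<and>
     (\<exists>K>0. strongly_convex_on Ak K hk)"

definition is_solution :: "('n::finite \<Rightarrow> 'a set) \<Rightarrow> ('n \<Rightarrow> ('n \<Rightarrow> 'a) \<Rightarrow> real)
    \<Rightarrow> ('n \<Rightarrow> ('a \<Rightarrow> real) \<Rightarrow> real) \<Rightarrow> (real \<Rightarrow> 'n \<Rightarrow> 'a \<Rightarrow> real) \<Rightarrow> bool" where
  "is_solution A pay h y \<longleftrightarrow> (\<forall>t\<ge>0. \<forall>k. \<forall>a\<in>A k.
     ((\<lambda>s. y s k a) has_real_derivative payoff_vec A pay k (choice_map A h (y t)) a)
       (at t within {0..}))"

end

theory Submission
  imports Defs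
begin




lemma cont_coord2: "continuous_on UNIV (\<lambda>x::'n \<Rightarrow> 'a \<Rightarrow> real. x k a)"
  by (rule continuous_on_product_then_coordinatewise[OF continuous_on_product_coordinates])

lemma cont_coord: "continuous_on S (\<lambda>x::'a \<Rightarrow> real. x a)"
  by (rule continuous_on_subset[OF continuous_on_product_coordinates subset_UNIV])

lemma compact_mixed:
  assumes "finite Ak" shows "compact (mixed Ak)"
proof -
  define S where "S = (\<lambda>a. if a \<in> Ak then {0..1::real} else {0})"
  have "compactin (product_topology (\<lambda>i. euclidean) UNIV) (PiE UNIV S)"
    unfolding compactin_PiE S_def by auto
  then have c: "compact (PiE UNIV S)"
    by (simp add: euclidean_product_topology)
  have cl: "closed {x::'a\<Rightarrow>real. sum x Ak = 1}"
    by (rule closed_Collect_eq) (intro continuous_on_sum cont_coord continuous_on_const)+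
  have "mixed Ak = PiE UNIV S \<inter> {x. sum x Ak = 1}"
  proof (intro set_eqI iffI)
    fix x assume x: "x \<in> mixed Ak"
    have "x a \<le> 1" if "a \<in> Ak" for a
    proof -
      have "x a \<le> sum x Ak" using x that assms by (intro member_le_sum) (auto simp: mixed_def)
      then show ?thesis using x by (simp add: mixed_def)
    qed
    then show "x \<in> PiE UNIV S \<inter> {x. sum x Ak = 1}" using x by (auto simp: mixed_def S_def)
  next
    fix x assume "x \<in> PiE UNIV S \<inter> {x. sum x Ak = 1}"
    then show "x \<in> mixed Ak" by (auto simp: mixed_def S_def PiE_iff split: if_splits)
  qed
  then show ?thesis using c cl by auto
qed

lemma mixed_ne: assumes "finite Ak" "Ak \<noteq> {}" shows "mixed Ak \<noteq> {}"
proof -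
  obtain a where a: "a \<in> Ak" using assms by auto
  have "(\<lambda>b. if b = a then 1 else 0) \<in> mixed Ak"
    using a assms by (auto simp: mixed_def)
  then show ?thesis by auto
qed



lemma mixed_mid:
  assumes "x1 \<in> mixed Ak" "x2 \<in> mixed Ak" "0 \<le> t" "t \<le> 1" "finite Ak"
  shows "(\<lambda>a. t * x1 a + (1 - t) * x2 a) \<in> mixed Ak"
  using assms by (auto simp: mixed_def sum.distrib sum_distrib_left[symmetric])

lemma choice_spec:
  assumes fin: "finite Ak" and ne: "Ak \<noteq> {}" and pen: "penalty Ak hk"
  shows "choice Ak hk yk \<in> mixed Ak \<and>
     (\<forall>x'\<in>mixed Ak. (\<Sum>a\<in>Ak. yk a * x' a) - hk x' \<le> (\<Sum>a\<in>Ak. yk a * choice Ak hk yk a) - hk (choice Ak hk yk))"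
proof -
  define F where "F = (\<lambda>x. (\<Sum>a\<in>Ak. yk a * x a) - hk x)"
  have hc: "continuous_on (mixed Ak) hk" using pen by (simp add: penalty_def)
  obtain K where K: "K > 0" "strongly_convex_on Ak K hk" using pen by (auto simp: penalty_def)
  have Fc: "continuous_on (mixed Ak) F"
    unfolding F_def by (intro continuous_on_diff continuous_on_sum continuous_on_mult continuous_on_const cont_coord hc)+
  obtain x0 where x0: "x0 \<in> mixed Ak" "\<forall>y\<in>mixed Ak. F y \<le> F x0"
    using continuous_attains_sup[OF compact_mixed[OF fin] mixed_ne[OF fin ne] Fc] by blast
  have uniq: "x = x0" if x: "x \<in> mixed Ak" "\<forall>y\<in>mixed Ak. F y \<le> F x" for x
  proof (rule ccontr)
    assume neq: "x \<noteq> x0"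
    then obtain b where "x b \<noteq> x0 b" by auto
    then have b: "b \<in> Ak" using x(1) x0(1) unfolding mixed_def by (metis (mono_tags, lifting) mem_Collect_eq)
    have pos: "0 < (\<Sum>a\<in>Ak. (x a - x0 a)\<^sup>2)"
      using \<open>x b \<noteq> x0 b\<close> b fin by (intro sum_pos2[of _ b]) auto
    define m where "m = (\<lambda>a. (1/2) * x a + (1 - 1/2) * x0 a)"
    have mm: "m \<in> mixed Ak" unfolding m_def by (rule mixed_mid) (use x x0 fin in auto)
    have hm: "hk m \<le> (1/2) * hk x + (1 - 1/2) * hk x0 - K * (1/2) * (1 - 1/2) * (\<Sum>a\<in>Ak. (x a - x0 a)\<^sup>2) / 2"
    proof -
      have H: "\<forall>t::real. 0 \<le> t \<and> t \<le> 1 \<longrightarrow> hk (\<lambda>a. t * x a + (1 - t) * x0 a) \<le> t * hk x + (1 - t) * hk x0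
        - K * t * (1 - t) * (\<Sum>a\<in>Ak. (x a - x0 a)\<^sup>2) / 2"
        using K(2) x(1) x0(1) unfolding strongly_convex_on_def by blast
      show ?thesis unfolding m_def by (rule mp[OF spec[OF H, of "1/2"]]) simp
    qed
    have lin: "(\<Sum>a\<in>Ak. yk a * m a) = (1/2) * (\<Sum>a\<in>Ak. yk a * x a) + (1/2) * (\<Sum>a\<in>Ak. yk a * x0 a)"
      unfolding m_def by (simp add: sum.distrib sum_distrib_left algebra_simps)
    have "F m > (1/2) * F x + (1/2) * F x0"
      using hm lin mult_pos_pos[OF K(1) pos] unfolding F_def by (simp add: algebra_simps)
    moreover have "F m \<le> F x" "F x0 \<le> F x" "F m \<le> F x0" using x x0 mm by auto
    ultimately show False by linarith
  qed
  have "\<exists>!x. x \<in> mixed Ak \<and> (\<forall>y\<in>mixed Ak. F y \<le> F x)"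
    using x0 uniq by blast
  then have "choice Ak hk yk \<in> mixed Ak \<and> (\<forall>y\<in>mixed Ak. F y \<le> F (choice Ak hk yk))"
    unfolding choice_def F_def by (rule theI')
  then show ?thesis unfolding F_def by auto
qed

lemma h_range:
  assumes fin: "finite Ak" and ne: "Ak \<noteq> {}" and pen: "penalty Ak hk"
  obtains D where "\<And>x x'. x \<in> mixed Ak \<Longrightarrow> x' \<in> mixed Ak \<Longrightarrow> hk x' - hk x \<le> D"
proof -
  have hc: "continuous_on (mixed Ak) hk" using pen by (simp add: penalty_def)
  obtain u where u: "\<forall>y\<in>mixed Ak. hk y \<le> hk u"
    using continuous_attains_sup[OF compact_mixed[OF fin] mixed_ne[OF fin ne] hc] by blast
  obtain l where l: "\<forall>y\<in>mixed Ak. hk l \<le> hk y"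
    using continuous_attains_inf[OF compact_mixed[OF fin] mixed_ne[OF fin ne] hc] by blast
  show ?thesis
    by (rule that[of "hk u - hk l"]) (use u l in force)
qed

lemma choice_bound:
  fixes Ak :: "'a set"
  assumes fin: "finite Ak" and ne: "Ak \<noteq> {}" and pen: "penalty Ak hk"
    and D: "\<And>x x'. x \<in> mixed Ak \<Longrightarrow> x' \<in> mixed Ak \<Longrightarrow> hk x' - hk x \<le> D"
    and al: "\<alpha> \<in> Ak" and be: "\<beta> \<in> Ak" and ab: "\<alpha> \<noteq> \<beta>"
  shows "choice Ak hk yk \<alpha> * (yk \<beta> - yk \<alpha>) \<le> D"
proof -
  define x where "x = choice Ak hk yk"
  have x: "x \<in> mixed Ak" "\<forall>x'\<in>mixed Ak. (\<Sum>a\<in>Ak. yk a * x' a) - hk x' \<le> (\<Sum>a\<in>Ak. yk a * x a) - hk x"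
    using choice_spec[OF fin ne pen] unfolding x_def by auto
  define e where "e = (\<lambda>c b::'a. if b = c then 1 else (0::real))"
  define x' where "x' = (\<lambda>a. x a + x \<alpha> * (e \<beta> a - e \<alpha> a))"
  have x'm: "x' \<in> mixed Ak"
    using x(1) al be ab fin
    by (auto simp: mixed_def x'_def e_def sum.distrib sum_distrib_left[symmetric] sum_subtractf)
  have ye: "(\<Sum>a\<in>Ak. yk a * e c a) = yk c" if "c \<in> Ak" for c
  proof -
    have "(\<Sum>a\<in>Ak. yk a * e c a) = (\<Sum>a\<in>Ak. if a = c then yk c else 0)"
      by (rule sum.cong) (auto simp: e_def)
    then show ?thesis using that fin by simp
  qed
  have "(\<Sum>a\<in>Ak. yk a * x' a) = (\<Sum>a\<in>Ak. yk a * x a) + x \<alpha> * ((\<Sum>a\<in>Ak. yk a * e \<beta> a) - (\<Sum>a\<in>Ak. yk a * e \<alpha> a))"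
    unfolding x'_def by (simp add: algebra_simps sum.distrib sum_subtractf sum_distrib_left)
  then have "(\<Sum>a\<in>Ak. yk a * x' a) = (\<Sum>a\<in>Ak. yk a * x a) + x \<alpha> * (yk \<beta> - yk \<alpha>)"
    using ye[OF al] ye[OF be] by simp
  then have "x \<alpha> * (yk \<beta> - yk \<alpha>) \<le> hk x' - hk x" using x(2) x'm by force
  also have "\<dots> \<le> D" using D x(1) x'm by auto
  finally show ?thesis unfolding x_def .
qed



lemma prod_upd:
  fixes x :: "'n::finite \<Rightarrow> 'a \<Rightarrow> real"
  shows "(\<Prod>l\<in>UNIV. (x(k := w)) l (\<alpha> l)) = w (\<alpha> k) * (\<Prod>l\<in>UNIV - {k}. x l (\<alpha> l))"
proof -
  have "(\<Prod>l\<in>UNIV. (x(k := w)) l (\<alpha> l)) = (x(k := w)) k (\<alpha> k) * (\<Prod>l\<in>UNIV - {k}. (x(k := w)) l (\<alpha> l))"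
    by (rule prod.remove) auto
  also have "(\<Prod>l\<in>UNIV - {k}. (x(k := w)) l (\<alpha> l)) = (\<Prod>l\<in>UNIV - {k}. x l (\<alpha> l))"
    by (rule prod.cong) auto
  finally show ?thesis by simp
qed

lemma exp_payoff_upd:
  fixes A :: "'n::finite \<Rightarrow> 'a set"
  assumes fin: "\<And>l. finite (A l)"
  shows "exp_payoff A pay k (x(k := z)) = (\<Sum>a\<in>A k. z a * payoff_vec A pay k x a)"
proof -
  define R where "R = (\<lambda>\<alpha>. \<Prod>l\<in>UNIV - {k}. x l (\<alpha> l))"
  have finP: "finite (PiE UNIV A)" using fin by (simp add: finite_PiE)
  have "(\<Sum>a\<in>A k. z a * payoff_vec A pay k x a)
      = (\<Sum>a\<in>A k. \<Sum>\<alpha>\<in>PiE UNIV A. z a * ((if \<alpha> k = a then 1 else 0) * R \<alpha> * pay k \<alpha>))"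
    unfolding payoff_vec_def exp_payoff_def prod_upd R_def by (simp add: sum_distrib_left)
  also have "\<dots> = (\<Sum>\<alpha>\<in>PiE UNIV A. \<Sum>a\<in>A k. z a * ((if \<alpha> k = a then 1 else 0) * R \<alpha> * pay k \<alpha>))"
    by (rule sum.swap)
  also have "\<dots> = (\<Sum>\<alpha>\<in>PiE UNIV A. z (\<alpha> k) * R \<alpha> * pay k \<alpha>)"
  proof (rule sum.cong[OF refl])
    fix \<alpha> assume "\<alpha> \<in> PiE UNIV A"
    then have ak: "\<alpha> k \<in> A k" by (auto simp: PiE_iff)
    have "(\<Sum>a\<in>A k. z a * ((if \<alpha> k = a then 1 else 0) * R \<alpha> * pay k \<alpha>))
        = (\<Sum>a\<in>A k. if \<alpha> k = a then z (\<alpha> k) * R \<alpha> * pay k \<alpha> else 0)"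
      by (rule sum.cong) auto
    then show "(\<Sum>a\<in>A k. z a * ((if \<alpha> k = a then 1 else 0) * R \<alpha> * pay k \<alpha>)) = z (\<alpha> k) * R \<alpha> * pay k \<alpha>"
      using ak fin by simp
  qed
  also have "\<dots> = exp_payoff A pay k (x(k := z))"
    unfolding exp_payoff_def prod_upd R_def by simp
  finally show ?thesis by simp
qed

lemma cont_pv:
  fixes A :: "'n::finite \<Rightarrow> 'a set"
  shows "continuous_on UNIV (\<lambda>x. payoff_vec A pay k x a)"
  unfolding payoff_vec_def exp_payoff_def prod_upd
  by (intro continuous_on_sum continuous_on_mult continuous_on_prod continuous_on_const cont_coord2)



theorem proposition5p2:
  fixes A :: "'n::finite \<Rightarrow> 'a set"
    and pay :: "'n \<Rightarrow> ('n \<Rightarrow> 'a) \<Rightarrow> real"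
    and h :: "'n \<Rightarrow> ('a \<Rightarrow> real) \<Rightarrow> real"
    and xs :: "'n \<Rightarrow> 'a \<Rightarrow> real"
  assumes fin: "\<And>k. finite (A k)"
    and ne: "\<And>k. A k \<noteq> {}"
    and pen: "\<And>k. penalty (A k) (h k)"
    and xs: "xs \<in> profiles A"
    and hyp: "\<And>U. open U \<Longrightarrow> xs \<in> U \<Longrightarrow>
               \<exists>y. is_solution A pay h y \<and> (\<forall>t\<ge>0. choice_map A h (y t) \<in> U)"
  shows "nash_eq A pay xs"
proof (rule ccontr)
  assume nn: "\<not> nash_eq A pay xs"
  then obtain k xk where xk: "xk \<in> mixed (A k)"
    and gt: "exp_payoff A pay k (xs(k := xk)) > exp_payoff A pay k xs"
    using xs unfolding nash_eq_def by (auto simp: not_le)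
  have xsk: "xs k \<in> mixed (A k)" using xs by (simp add: profiles_def)
  define v where "v = (\<lambda>a. payoff_vec A pay k xs a)"
  define E where "E = (\<Sum>a\<in>A k. xs k a * v a)"
  have "exp_payoff A pay k (xs(k := xs k)) = E"
    unfolding E_def v_def by (rule exp_payoff_upd[OF fin])
  then have E1: "exp_payoff A pay k xs = E" by simp
  have G: "exp_payoff A pay k (xs(k := xk)) = (\<Sum>a\<in>A k. xk a * v a)"
    unfolding v_def by (rule exp_payoff_upd[OF fin])
  obtain \<beta> where be: "\<beta> \<in> A k" "v \<beta> > E"
  proof (rule ccontr)
    assume "\<not> thesis"
    then have le: "\<forall>a\<in>A k. v a \<le> E" using that by force
    have "(\<Sum>a\<in>A k. xk a * v a) \<le> (\<Sum>a\<in>A k. xk a * E)"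
      using le xk by (intro sum_mono mult_left_mono) (auto simp: mixed_def)
    also have "\<dots> = E" using xk by (simp add: sum_distrib_right[symmetric] mixed_def)
    finally show False using gt G E1 by linarith
  qed
  obtain a0 where a0: "a0 \<in> A k" "xs k a0 > 0"
  proof (rule ccontr)
    assume "\<not> thesis"
    then have "\<forall>a\<in>A k. xs k a = 0" using that xsk by (force simp: mixed_def)
    then have "sum (xs k) (A k) = 0" by simp
    then show False using xsk by (simp add: mixed_def)
  qed
  obtain \<alpha> where al: "\<alpha> \<in> A k" "xs k \<alpha> > 0" "v \<alpha> \<le> E"
  proof (rule ccontr)
    assume "\<not> thesis"
    then have H: "\<forall>a\<in>A k. xs k a > 0 \<longrightarrow> v a > E" using that by force
    have "0 < (\<Sum>a\<in>A k. xs k a * (v a - E))"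
    proof (rule sum_pos2[OF fin a0(1)])
      show "0 < xs k a0 * (v a0 - E)" using H a0 by simp
      show "\<And>i. i \<in> A k \<Longrightarrow> 0 \<le> xs k i * (v i - E)"
      proof -
        fix i assume i: "i \<in> A k"
        have "0 \<le> xs k i" using xsk i by (simp add: mixed_def)
        then show "0 \<le> xs k i * (v i - E)"
          using H i by (cases "xs k i = 0") auto
      qed
    qed
    also have "(\<Sum>a\<in>A k. xs k a * (v a - E)) = E - E * sum (xs k) (A k)"
      unfolding E_def by (simp add: algebra_simps sum_subtractf sum_distrib_right)
    also have "\<dots> = 0" using xsk by (simp add: mixed_def)
    finally show False by simp
  qed
  have ab: "\<alpha> \<noteq> \<beta>" using al be by auto
  define c where "c = v \<beta> - v \<alpha>"
  have c: "c > 0" using al be unfolding c_def by simp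
  define \<delta> where "\<delta> = xs k \<alpha> / 2"
  have \<delta>: "\<delta> > 0" using al unfolding \<delta>_def by simp
  define U where "U = {x. \<delta> < x k \<alpha>} \<inter> {x. c/2 < payoff_vec A pay k x \<beta> - payoff_vec A pay k x \<alpha>}"
  have oU: "open U" unfolding U_def
    by (intro open_Int open_Collect_less continuous_on_const cont_coord2 continuous_on_diff cont_pv)
  have xsU: "xs \<in> U" unfolding U_def using \<delta> c unfolding \<delta>_def c_def v_def by auto
  obtain y where sol: "is_solution A pay h y" and inU: "\<forall>t\<ge>0. choice_map A h (y t) \<in> U"
    using hyp[OF oU xsU] by blast
  obtain D where D: "\<And>x x'. x \<in> mixed (A k) \<Longrightarrow> x' \<in> mixed (A k) \<Longrightarrow> h k x' - h k x \<le> D"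
    using h_range[OF fin ne pen] by blast
  have D0: "D \<ge> 0" using D[of xk xk] xk by simp
  define g where "g = (\<lambda>t. y t k \<beta> - y t k \<alpha>)"
  define d where "d = (\<lambda>t. payoff_vec A pay k (choice_map A h (y t)) \<beta> - payoff_vec A pay k (choice_map A h (y t)) \<alpha>)"
  have bnd: "choice_map A h (y t) k \<alpha> * g t \<le> D" for t
    unfolding g_def choice_map_def
    by (rule choice_bound[OF fin ne pen D al(1) be(1) ab])
  have der: "((\<lambda>s. g s - c/2 * s) has_real_derivative (d t - c/2)) (at t within {0..})" if "t \<ge> 0" for t
  proof -
    have "((\<lambda>s. g s) has_real_derivative d t) (at t within {0..})"
      unfolding g_def d_def
      by (rule DERIV_diff) (use sol that al(1) be(1) in \<open>auto simp: is_solution_def\<close>)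
    from DERIV_diff[OF this DERIV_cmult[OF DERIV_ident, of "c/2" t "{0..}"]]
    show ?thesis by simp
  qed
  have dpos: "d t > c/2" if "t \<ge> 0" for t
    using inU that unfolding U_def d_def by auto
  have gT: "g T \<ge> g 0 + c/2 * T" if T: "T \<ge> 0" for T
  proof -
    have "(\<lambda>s. g s - c/2 * s) 0 \<le> (\<lambda>s. g s - c/2 * s) T"
    proof (rule DERIV_nonneg_imp_increasing_open[OF T])
      fix s :: real assume s: "0 < s" "s < T"
      have "((\<lambda>s. g s - c/2 * s) has_real_derivative (d s - c/2)) (at s within {0<..})"
        by (rule DERIV_subset[OF der[of s]]) (use s in auto)
      moreover have "at s within {0<..} = at s" by (rule at_within_open) (use s in auto)
      ultimately have "((\<lambda>s. g s - c/2 * s) has_real_derivative (d s - c/2)) (at s)"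
        by simp
      moreover have "d s - c/2 \<ge> 0" using dpos[of s] s by simp
      ultimately show "\<exists>y. ((\<lambda>s. g s - c/2 * s) has_real_derivative y) (at s) \<and> 0 \<le> y" by blast
    next
      show "continuous_on {0..T} (\<lambda>s. g s - c/2 * s)"
        unfolding continuous_on_eq_continuous_within
      proof
        fix s assume s: "s \<in> {0..T}"
        have s0: "s \<ge> 0" using s by simp
        have "continuous (at s within {0..}) (\<lambda>s. g s - c/2 * s)"
          by (rule DERIV_continuous[OF der[OF s0]])
        then show "continuous (at s within {0..T}) (\<lambda>s. g s - c/2 * s)"
          by (rule continuous_within_subset) (auto simp: atLeastAtMost_def)
      qed
    qed
    then show ?thesis by simp
  qed
  define T where "T = max 0 ((D/\<delta> + 1 - g 0) * 2 / c)"
  have T0: "T \<ge> 0" unfolding T_def by simp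
  have "(D/\<delta> + 1 - g 0) * 2 / c \<le> T" unfolding T_def by simp
  then have "D/\<delta> + 1 - g 0 \<le> c/2 * T" using c by (simp add: field_simps)
  then have gbig: "g T \<ge> D/\<delta> + 1" using gT[OF T0] by linarith
  have gpos: "g T \<ge> 0" using gbig D0 \<delta> by (smt (verit) divide_nonneg_pos)
  have xa: "choice_map A h (y T) k \<alpha> > \<delta>" using inU T0 unfolding U_def by auto
  have "\<delta> * g T \<le> choice_map A h (y T) k \<alpha> * g T"
    using xa gpos by (intro mult_right_mono) auto
  moreover have "\<delta> * (D/\<delta> + 1) \<le> \<delta> * g T" using gbig \<delta> by simp
  moreover have "\<delta> * (D/\<delta> + 1) = D + \<delta>" using \<delta> by (simp add: field_simps)
  ultimately show False using bnd[of T] \<delta> by linarith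
qed


end
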